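(* In the tracking setting, fix $k\geq0$. If $$\|s_{k+1}-s_k\|_2<\min\Big\{r_A,\ r_B,\ \frac{q_B\rho}{\lambda_A\lambda_F}\Big\}\quad\text{and}\quad \|\bar w_k-w^\ast_k\|_2<q_B\rho,$$ then $$\|w^\infty_k-w^\ast_{k+1}\|_2\leq\frac{\lambda_B\lambda_H}{\rho}\Big(\|\bar w_k-w^\ast_k\|_2+\lambda_A\lambda_F\|s_{k+1}-s_k\|_2\Big).$$
   Context: Problem data: $z=(z_1,\dots,z_P)\in\mathbb{R}^{n_z}$; $\mathcal{Z}=\mathcal{Z}_1\times\cdots\times\mathcal{Z}_P$ a product of nonempty bounded boxes; $J(z)=\sum_iJ_i(z_i)$ with polynomials $J_i$; polynomial maps $Q_c:\mathbb{R}^{n_z}\to\mathbb{R}^m$, $g_i:\mathbb{R}^{n_i}\to\mathbb{R}^{q_i}$; $T_i\in\mathbb{R}^{q_i\times p}$; $q=\sum q_i$; $\mathcal{S}\subseteq\mathbb{R}^p$; $G(z,s)=(Q_c(z),g_1(z_1)+T_1s,\dots,g_P(z_P)+T_Ps)$; $L_\rho(z,\mu,s)=J(z)+(\mu+\frac\rho2G(z,s))^\top G(z,s)$; for $w=(z,\mu)$, $F(w,s)=(\nabla J(z)+\nabla_zG(z,s)^\top\mu,\ G(z,s))$; $\mathcal{N}:=\mathcal{N}_{\mathcal{Z}\times\mathbb{R}^{m+q}}$. A KKT point of $(P_s)$: $\min J(z)$ s.t. $G(z,s)=0$, $z\in\mathcal{Z}$, is $w$ with $0\in F(w,s)+\mathcal{N}(w)$.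 For a reference multiplier $\tilde\mu$: $H^{\tilde\mu}_\rho(w,d,s):=(\nabla J(z)+\nabla_zG(z,s)^\top\mu,\ G(z,s)+d+(\tilde\mu-\mu)/\rho)$. Constants: $\lambda_F:=P\max_i\|T_i\|_2$ (so $\|F(w,s)-F(w,s')\|\le\lambda_F\|s-s'\|$); $\lambda_H>0$ with $\|H^{\tilde\mu}_\rho(w,d,s)-H^{\tilde\mu}_\rho(w,d',s')\|\le\lambda_H\|(d,s)-(d',s')\|$ for all arguments; $\lambda_G>0$ a Lipschitz constant of $z\mapsto G(z,s)$ on $\mathcal{Z}$ (independent of $s$). Primal sweep on $L_\rho(\cdot,\mu,s)$: block-coordinate projected-gradient pass over $i=1,\dots,P$ in order, each block update $z_i\leftarrow\pi_{\mathcal{Z}_i}(z_i-\frac1{c_i}\nabla_{z_i}L_\rho)$ (gradient evaluated with already updated preceding blocks) with curvature $c_i$ obtained by backtracking (multiply by $\beta>1$ from an initial $c_i^0>0$) until $f(u)+\frac{\alpha_i}2\|u-z_i\|^2\le f(z_i)+\nabla f(z_i)^\top(u-z_i)+\frac{c_i}2\|u-z_i\|^2$ for the block function $f$, with $\alpha_i>0$. Tracking setting: fix $\rho>0$, $M\ge1$. Given parameters $(s_k)_{k\ge0}\subset\mathcal{S}$ and KKT points $w^\ast_k=(z^\ast_k,\mu^\ast_k)$ of $(P_{s_k})$. Iterates $\bar w_k=(\bar z_k,\bar\mu_k)$ with $\bar z_k\in\mathcal{Z}$ are produced by: $\bar z_{k+1}$ = result of $M$ successive primal sweeps on $L_\rho(\cdot,\bar\mu_k,s_{k+1})$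 started at $\bar z_k$; $\bar\mu_{k+1}=\bar\mu_k+\rho G(\bar z_{k+1},s_{k+1})$. Let $z^\infty_k$ be the limit of infinitely many sweeps on $L_\rho(\cdot,\bar\mu_k,s_{k+1})$ started at $\bar z_k$, and $w^\infty_k:=(z^\infty_k,\ \bar\mu_k+\rho G(z^\infty_k,s_{k+1}))$; $d_k:=(\bar\mu_k-\mu^\ast_k)/\rho$. Standing hypotheses, for every $k$: (A) there are constants $r_A,\delta_A,\lambda_A>0$ (independent of $k$) such that for every $s\in\mathcal{B}(s_k,r_A)\cap\mathcal{S}$ there is a unique $w^\ast(s)\in\mathcal{B}(w^\ast_k,\delta_A)$ with $0\in F(w^\ast(s),s)+\mathcal{N}(w^\ast(s))$, for all $s,s'\in\mathcal{B}(s_k,r_A)\cap\mathcal{S}$ one has $\|w^\ast(s)-w^\ast(s')\|\le\lambda_A\|F(w^\ast(s'),s)-F(w^\ast(s'),s')\|$, and $w^\ast_{k+1}=w^\ast(s_{k+1})$ whenever $\|s_{k+1}-s_k\|<r_A$; (B) there are constants $r_B,q_B,\lambda_B>0$ and $\delta_B\ge\delta_A$ (independent of $k$) such that for all $d\in\mathcal{B}(0,q_B)$, $s\in\mathcal{B}(s_k,r_B)\cap\mathcal{S}$ there is a unique $w^\ast_k(d,s)\in\mathcal{B}(w^\ast_k,\delta_B)$ with $0\in H^{\mu^\ast_k}_\rho(w^\ast_k(d,s),d,s)+\mathcal{N}(w^\ast_k(d,s))$, and $\|w^\ast_k(d,s)-w^\ast_k(d',s')\|\le\lambda_B\|H^{\mu^\ast_k}_\rho(w^\ast_k(d',s'),d,s)-H^{\mu^\ast_k}_\rho(w^\ast_k(d',s'),d',s')\|$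 for all such $d,d',s,s'$; (C) there are constants $C>0$, $\delta>0$, $\psi>0$ (independent of $k$) such that the sequence of sweeps defining $z^\infty_k$ converges, $w^\infty_k=w^\ast_k(d_k,s_{k+1})$ whenever $d_k\in\mathcal{B}(0,q_B)$ and $\|s_{k+1}-s_k\|<r_B$, and if $\|\bar z_k-z^\infty_k\|<\delta$ then $\|\bar z_{k+1}-z^\infty_k\|\le CM^{-\psi}\|\bar z_k-z^\infty_k\|$. (In the paper, $\psi=\psi(d_L,n_z)=1/(d_L(3d_L-3)^{n_z-1}-2)$ with $d_L$ the degree of the augmented Lagrangian.) *)

theory Defs
  imports "HOL-Analysis.Analysis"
begin

inductive polyfun_on :: "'n set \<Rightarrow> (real^'n \<Rightarrow> real) \<Rightarrow> bool" for V where
  pconst: "polyfun_on V (\<lambda>x. c)"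
| pvar: "j \<in> V \<Longrightarrow> polyfun_on V (\<lambda>x. x $ j)"
| padd: "polyfun_on V f \<Longrightarrow> polyfun_on V g \<Longrightarrow> polyfun_on V (\<lambda>x. f x + g x)"
| pmult: "polyfun_on V f \<Longrightarrow> polyfun_on V g \<Longrightarrow> polyfun_on V (\<lambda>x. f x * g x)"

definition grad :: "('a::real_inner \<Rightarrow> real) \<Rightarrow> 'a \<Rightarrow> 'a" where
  "grad f x = (THE g. GDERIV f x :> g)"

definition boxset :: "real^'n \<Rightarrow> real^'n \<Rightarrow> (real^'n) set" where
  "boxset lo up = {z. \<forall>j. lo $ j \<le> z $ j \<and> z $ j \<le> up $ j}"

definition normal_cone :: "'a::real_inner set \<Rightarrow> 'a \<Rightarrow> 'a set" where
  "normal_cone C x = (if x \<in> C then {v. \<forall>y\<in>C. inner v (y - x) \<le> 0} else {})"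

definition gen_eq :: "'a::real_inner set \<Rightarrow> 'a \<Rightarrow> 'a \<Rightarrow> bool" where
  "gen_eq C Phi w \<longleftrightarrow> (0::'a) \<in> {Phi + v | v. v \<in> normal_cone C w}"

definition augL :: "(real^'n \<Rightarrow> real) \<Rightarrow> (real^'n \<Rightarrow> real^'p \<Rightarrow> real^'c) \<Rightarrow> real
    \<Rightarrow> real^'n \<Rightarrow> real^'c \<Rightarrow> real^'p \<Rightarrow> real" where
  "augL J G rho z mu s = J z + inner (mu + (rho / 2) *\<^sub>R G z s) (G z s)"

definition Fmap :: "(real^'n \<Rightarrow> real) \<Rightarrow> (real^'n \<Rightarrow> real^'p \<Rightarrow> real^'c)
    \<Rightarrow> ((real^'n) \<times> (real^'c)) \<Rightarrow> real^'p \<Rightarrow> ((real^'n) \<times> (real^'c))" where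
  "Fmap J G w s = (grad J (fst w) + grad (\<lambda>z. inner (snd w) (G z s)) (fst w), G (fst w) s)"

definition Hmap :: "(real^'n \<Rightarrow> real) \<Rightarrow> (real^'n \<Rightarrow> real^'p \<Rightarrow> real^'c) \<Rightarrow> real \<Rightarrow> real^'c
    \<Rightarrow> ((real^'n) \<times> (real^'c)) \<Rightarrow> real^'c \<Rightarrow> real^'p \<Rightarrow> ((real^'n) \<times> (real^'c))" where
  "Hmap J G rho mut w d s =
     (grad J (fst w) + grad (\<lambda>z. inner (snd w) (G z s)) (fst w),
      G (fst w) s + d + (1 / rho) *\<^sub>R (mut - snd w))"

text \<open>lambda_F = P * max_i ||T_i||_2, where T_i consists of the rows r of Tm with cblk r = Suc i
  (the operator norm is computed with the other rows zeroed out, which does not change it).\<close>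
definition lambdaF :: "nat \<Rightarrow> ('c \<Rightarrow> nat) \<Rightarrow> real^'p^'c \<Rightarrow> real" where
  "lambdaF P cblk Tm =
     real P * Max ((\<lambda>i. onorm (\<lambda>s. \<chi> r. if cblk r = Suc i then (Tm *v s) $ r else 0)) ` {..<P})"

text \<open>Vectors of block i are represented inside the full vector (other blocks fixed), so
  ||u - z_i|| and grad f(z_i)^T (u - z_i) are the full-space quantities.\<close>
definition block_update :: "('n \<Rightarrow> nat) \<Rightarrow> real^'n \<Rightarrow> real^'n \<Rightarrow> (nat \<Rightarrow> real) \<Rightarrow> (nat \<Rightarrow> real)
    \<Rightarrow> real \<Rightarrow> (real^'n \<Rightarrow> real) \<Rightarrow> nat \<Rightarrow> real^'n \<Rightarrow> real^'n" where
  "block_update blk lo up alpha c0 beta f i z =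
     (let g = grad f z;
          gi = (\<chi> j. if blk j = i then g $ j else 0);
          Zi = {y \<in> boxset lo up. \<forall>j. blk j \<noteq> i \<longrightarrow> y $ j = z $ j};
          u = (\<lambda>c. closest_point Zi (z - (1 / c) *\<^sub>R gi));
          ok = (\<lambda>c. f (u c) + alpha i / 2 * (norm (u c - z))\<^sup>2
                    \<le> f z + inner gi (u c - z) + c / 2 * (norm (u c - z))\<^sup>2);
          t = (LEAST t::nat. ok (c0 i * beta ^ t))
      in u (c0 i * beta ^ t))"

definition sweep :: "nat \<Rightarrow> ('n \<Rightarrow> nat) \<Rightarrow> real^'n \<Rightarrow> real^'n \<Rightarrow> (nat \<Rightarrow> real) \<Rightarrow> (nat \<Rightarrow> real)
    \<Rightarrow> real \<Rightarrow> (real^'n \<Rightarrow> real) \<Rightarrow> real^'n \<Rightarrow> real^'n" where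
  "sweep P blk lo up alpha c0 beta f z =
     foldl (\<lambda>z i. block_update blk lo up alpha c0 beta f i z) z [0..<P]"

end

theory Submission
  imports Defs
begin

lemma norm_snd_le2: "norm (snd x) \<le> norm x"
  by (metis norm_snd_le prod.collapse)

lemma grad_add_const: "grad (\<lambda>z. f z + (c::real)) = grad f"
proof -
  have "\<And>x g. (GDERIV (\<lambda>z. f z + c) x :> g) \<longleftrightarrow> (GDERIV f x :> g)"
  proof -
    fix x g
    show "(GDERIV (\<lambda>z. f z + c) x :> g) \<longleftrightarrow> (GDERIV f x :> g)"
      unfolding gderiv_def
      using has_derivative_add_const[of "\<lambda>z. f z + c" _ _ "-c"] has_derivative_add_const[of f _ _ c]
      by auto
  qed
  then show ?thesis unfolding grad_def by (intro ext arg_cong[where f=The] ext) simp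
qed

lemma Fmap_diff:
  assumes G_def: "G = (\<lambda>z s. Qg z + Tm *v s)"
  shows "Fmap J G w s' - Fmap J G w s = (0, Tm *v (s' - s))"
proof -
  have e: "\<And>s. grad (\<lambda>z. inner (snd w) (G z s)) = grad (\<lambda>z. inner (snd w) (Qg z))"
    unfolding G_def inner_add_right by (rule grad_add_const)
  show ?thesis unfolding Fmap_def e by (simp add: G_def matrix_vector_mult_diff_distrib)
qed

lemma Tm_bound:
  fixes Tm :: "real^('p::finite)^('c::finite)"
  assumes P_pos: "P \<ge> 1"
    and cblk_range: "\<forall>r. cblk r \<le> P"
    and rows0: "\<forall>r. cblk r = 0 \<longrightarrow> (\<forall>l. Tm $ r $ l = 0)"
  shows "norm (Tm *v v) \<le> lambdaF P cblk Tm * norm v"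
proof -
  define T where "T i = (\<lambda>s. \<chi> r. if cblk r = Suc i then (Tm *v s) $ r else 0)" for i
  define A where "A i = (\<chi> r l. if cblk r = Suc i then Tm $ r $ l else 0)" for i
  have TA: "T i = (\<lambda>s. A i *v s)" for i
    unfolding T_def A_def by (auto simp: vec_eq_iff matrix_vector_mult_def)
  have bl: "bounded_linear (T i)" for i
    unfolding TA by simp
  have sumT: "Tm *v v = (\<Sum>i<P. T i v)"
  proof (subst vec_eq_iff, rule allI)
    fix r
    have "(\<Sum>i<P. T i v) $ r = (\<Sum>i<P. if cblk r = Suc i then (Tm *v v) $ r else 0)"
      unfolding T_def by (simp add: sum_component)
    also have "\<dots> = (Tm *v v) $ r"
    proof (cases "cblk r")
      case 0
      then show ?thesis using rows0 by (simp add: matrix_vector_mult_def)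
    next
      case (Suc i0)
      then have "i0 < P" using cblk_range[rule_format, of r] by simp
      then show ?thesis using Suc
        by (simp add: sum.delta' [of "{..<P}" i0] cong: if_cong)
    qed
    finally show "(Tm *v v) $ r = (\<Sum>i<P. T i v) $ r" by simp
  qed
  define m where "m = Max ((\<lambda>i. onorm (T i)) ` {..<P})"
  have lf: "lambdaF P cblk Tm = real P * m" unfolding lambdaF_def m_def T_def by simp
  have "norm (Tm *v v) \<le> (\<Sum>i<P. norm (T i v))" unfolding sumT by (rule norm_sum)
  also have "\<dots> \<le> (\<Sum>i<P. m * norm v)"
  proof (rule sum_mono)
    fix i assume "i \<in> {..<P}"
    then have "onorm (T i) \<le> m" unfolding m_def by (intro Max_ge) auto
    then show "norm (T i v) \<le> m * norm v"
      using onorm[OF bl, of i v] by (meson mult_right_mono norm_ge_zero order_trans)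
  qed
  also have "\<dots> = lambdaF P cblk Tm * norm v" by (simp add: lf)
  finally show ?thesis .
qed

theorem mainTheorem8:
  fixes P :: nat and blk :: "'n::finite \<Rightarrow> nat" and lo up :: "real^'n"
    and Jb :: "nat \<Rightarrow> real^'n \<Rightarrow> real" and J :: "real^'n \<Rightarrow> real"
    and Qg :: "real^'n \<Rightarrow> real^'c" and cblk :: "'c::finite \<Rightarrow> nat" and Tm :: "real^('p::finite)^'c"
    and G :: "real^'n \<Rightarrow> real^'p \<Rightarrow> real^'c"
    and S :: "(real^'p) set" and rho :: real and M :: nat
    and alpha c0 :: "nat \<Rightarrow> real" and beta :: real
    and s :: "nat \<Rightarrow> real^'p" and wstar :: "nat \<Rightarrow> (real^'n) \<times> (real^'c)"
    and zbar :: "nat \<Rightarrow> real^'n" and mubar :: "nat \<Rightarrow> real^'c"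
    and zinf :: "nat \<Rightarrow> real^'n" and winf :: "nat \<Rightarrow> (real^'n) \<times> (real^'c)"
    and d :: "nat \<Rightarrow> real^'c"
    and lamH :: real
    and rA deltaA lamA :: real and wA :: "nat \<Rightarrow> real^'p \<Rightarrow> (real^'n) \<times> (real^'c)"
    and rB qB lamB deltaB :: real and wB :: "nat \<Rightarrow> real^'c \<Rightarrow> real^'p \<Rightarrow> (real^'n) \<times> (real^'c)"
    and Cc delta psi :: real
    and k :: nat
  assumes P_pos: "P \<ge> 1"
    and blk_range: "\<forall>j. blk j < P"
    and box_nonempty: "\<forall>j. lo $ j \<le> up $ j"
    and Jb_poly: "\<forall>i<P. polyfun_on {j. blk j = i} (Jb i)"
    and J_def: "J = (\<lambda>z. \<Sum>i<P. Jb i z)"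
    and cblk_range: "\<forall>r. cblk r \<le> P"
    and Qc_rows: "\<forall>r. cblk r = 0 \<longrightarrow> polyfun_on UNIV (\<lambda>z. Qg z $ r) \<and> (\<forall>l. Tm $ r $ l = 0)"
    and g_rows: "\<forall>r i. cblk r = Suc i \<longrightarrow> polyfun_on {j. blk j = i} (\<lambda>z. Qg z $ r)"
    and G_def: "G = (\<lambda>z s. Qg z + Tm *v s)"
    and rho_pos: "rho > 0" and M_ge: "M \<ge> 1"
    and alpha_pos: "\<forall>i. alpha i > 0" and c0_pos: "\<forall>i. c0 i > 0" and beta_gt: "beta > 1"
    and s_in_S: "\<forall>k. s k \<in> S"
    and wstar_kkt: "\<forall>k. gen_eq (boxset lo up \<times> UNIV) (Fmap J G (wstar k) (s k)) (wstar k)"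
    and zbar0: "zbar 0 \<in> boxset lo up"
    and zbar_step: "\<forall>k. zbar (Suc k) =
        (sweep P blk lo up alpha c0 beta (\<lambda>z. augL J G rho z (mubar k) (s (Suc k))) ^^ M) (zbar k)"
    and mubar_step: "\<forall>k. mubar (Suc k) = mubar k + rho *\<^sub>R G (zbar (Suc k)) (s (Suc k))"
    and zinf_def: "\<forall>k. zinf k =
        lim (\<lambda>n. (sweep P blk lo up alpha c0 beta (\<lambda>z. augL J G rho z (mubar k) (s (Suc k))) ^^ n) (zbar k))"
    and winf_def: "\<forall>k. winf k = (zinf k, mubar k + rho *\<^sub>R G (zinf k) (s (Suc k)))"
    and d_def: "\<forall>k. d k = (1 / rho) *\<^sub>R (mubar k - snd (wstar k))"
    and lamH_pos: "lamH > 0"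
    and H_lip: "\<forall>mut w dd ss dd' ss'. norm (Hmap J G rho mut w dd ss - Hmap J G rho mut w dd' ss')
                  \<le> lamH * norm ((dd, ss) - (dd', ss'))"
    and A_pos: "rA > 0" "deltaA > 0" "lamA > 0"
    and A_sol: "\<forall>k. \<forall>ss \<in> ball (s k) rA \<inter> S.
        wA k ss \<in> ball (wstar k) deltaA \<and> gen_eq (boxset lo up \<times> UNIV) (Fmap J G (wA k ss) ss) (wA k ss)
        \<and> (\<forall>w \<in> ball (wstar k) deltaA. gen_eq (boxset lo up \<times> UNIV) (Fmap J G w ss) w \<longrightarrow> w = wA k ss)"
    and A_lip: "\<forall>k. \<forall>ss \<in> ball (s k) rA \<inter> S. \<forall>ss' \<in> ball (s k) rA \<inter> S.
        norm (wA k ss - wA k ss') \<le> lamA * norm (Fmap J G (wA k ss') ss - Fmap J G (wA k ss') ss')"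
    and A_next: "\<forall>k. norm (s (Suc k) - s k) < rA \<longrightarrow> wstar (Suc k) = wA k (s (Suc k))"
    and B_pos: "rB > 0" "qB > 0" "lamB > 0" "deltaB \<ge> deltaA"
    and B_sol: "\<forall>k. \<forall>dd \<in> ball 0 qB. \<forall>ss \<in> ball (s k) rB \<inter> S.
        wB k dd ss \<in> ball (wstar k) deltaB
        \<and> gen_eq (boxset lo up \<times> UNIV) (Hmap J G rho (snd (wstar k)) (wB k dd ss) dd ss) (wB k dd ss)
        \<and> (\<forall>w \<in> ball (wstar k) deltaB.
             gen_eq (boxset lo up \<times> UNIV) (Hmap J G rho (snd (wstar k)) w dd ss) w \<longrightarrow> w = wB k dd ss)"
    and B_lip: "\<forall>k. \<forall>dd \<in> ball 0 qB. \<forall>dd' \<in> ball 0 qB. \<forall>ss \<in> ball (s k) rB \<inter> S. \<forall>ss' \<in> ball (s k) rB \<inter> S.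
        norm (wB k dd ss - wB k dd' ss')
          \<le> lamB * norm (Hmap J G rho (snd (wstar k)) (wB k dd' ss') dd ss
                         - Hmap J G rho (snd (wstar k)) (wB k dd' ss') dd' ss')"
    and C_pos: "Cc > 0" "delta > 0" "psi > 0"
    and C_conv: "\<forall>k. convergent
        (\<lambda>n. (sweep P blk lo up alpha c0 beta (\<lambda>z. augL J G rho z (mubar k) (s (Suc k))) ^^ n) (zbar k))"
    and C_lim: "\<forall>k. d k \<in> ball 0 qB \<and> norm (s (Suc k) - s k) < rB \<longrightarrow> winf k = wB k (d k) (s (Suc k))"
    and C_rate: "\<forall>k. norm (zbar k - zinf k) < delta \<longrightarrow>
        norm (zbar (Suc k) - zinf k) \<le> Cc * real M powr (- psi) * norm (zbar k - zinf k)"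
    and step_small: "norm (s (Suc k) - s k) < rA" "norm (s (Suc k) - s k) < rB"
      "lamA * lambdaF P cblk Tm * norm (s (Suc k) - s k) < qB * rho"
    and wbar_close: "norm ((zbar k, mubar k) - wstar k) < qB * rho"
  shows "norm (winf k - wstar (Suc k))
     \<le> lamB * lamH / rho * (norm ((zbar k, mubar k) - wstar k)
                              + lamA * lambdaF P cblk Tm * norm (s (Suc k) - s k))"
  proof -
  define s1 where "s1 = s (Suc k)"
  define s0 where "s0 = s k"
  define ws where "ws = wstar k"
  define ws1 where "ws1 = wstar (Suc k)"
  define wb where "wb = (zbar k, mubar k)"
  define D where "D = norm (s1 - s0)"
  define LF where "LF = lambdaF P cblk Tm"
  have s0in: "s0 \<in> ball (s k) rA \<inter> S" using s_in_S A_pos by (simp add: s0_def)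
  have s1in: "s1 \<in> ball (s k) rA \<inter> S" using s_in_S step_small(1)
    by (simp add: s1_def dist_norm norm_minus_commute)
  have s1inB: "s1 \<in> ball (s k) rB \<inter> S" using s_in_S step_small(2)
    by (simp add: s1_def dist_norm norm_minus_commute)
  have uA0: "\<forall>w \<in> ball (wstar k) deltaA. gen_eq (boxset lo up \<times> UNIV) (Fmap J G w s0) w \<longrightarrow> w = wA k s0"
    using A_sol s0in by blast
  have h1: "wstar k \<in> ball (wstar k) deltaA" using A_pos by simp
  have h2: "gen_eq (boxset lo up \<times> UNIV) (Fmap J G (wstar k) s0) (wstar k)"
    using wstar_kkt by (simp add: s0_def)
  have wA0: "wA k s0 = ws" using uA0[rule_format, OF h1 h2] unfolding ws_def by simp
  have ws1A: "ws1 = wA k s1" using A_next step_small(1) by (simp add: ws1_def s1_def)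
  have Tb: "norm (Tm *v (s1 - s0)) \<le> LF * D"
    unfolding LF_def D_def
    by (rule Tm_bound) (use P_pos cblk_range Qc_rows in auto)
  have "norm (ws1 - ws) \<le> lamA * norm (Fmap J G ws s1 - Fmap J G ws s0)"
    using A_lip[rule_format, OF s1in s0in] by (simp add: ws1A wA0)
  also have "Fmap J G ws s1 - Fmap J G ws s0 = (0, Tm *v (s1 - s0))"
    by (rule Fmap_diff[OF G_def])
  also have "norm ((0::real^'n), Tm *v (s1 - s0)) = norm (Tm *v (s1 - s0))"
    by (simp add: norm_Pair)
  finally have w0: "norm (ws1 - ws) \<le> lamA * norm (Tm *v (s1 - s0))" .
  have "lamA * norm (Tm *v (s1 - s0)) \<le> lamA * (LF * D)"
    using Tb A_pos(3) by (intro mult_left_mono) auto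
  then have wdist: "norm (ws1 - ws) \<le> lamA * LF * D" using w0 by (simp add: mult.assoc)
  define d' where "d' = (1 / rho) *\<^sub>R (snd ws1 - snd ws)"
  have nsnd: "norm (snd ws1 - snd ws) \<le> norm (ws1 - ws)"
    using norm_snd_le2[of "ws1 - ws"] by simp
  have nd': "norm d' \<le> norm (ws1 - ws) / rho" unfolding d'_def
    using nsnd rho_pos by (simp add: divide_right_mono)
  have "lamA * LF * D < qB * rho" using step_small(3) by (simp add: LF_def D_def s1_def s0_def)
  then have "norm (ws1 - ws) / rho < qB" using wdist rho_pos by (simp add: divide_less_eq)
  then have d'in: "d' \<in> ball 0 qB" using nd' by simp
  have Heq: "Hmap J G rho (snd ws) ws1 d' s1 = Fmap J G ws1 s1"
  proof -
    have z: "d' + (1 / rho) *\<^sub>R (snd ws - snd ws1) = 0"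
      by (simp add: d'_def algebra_simps)
    show ?thesis unfolding Hmap_def Fmap_def by (simp add: add.assoc z)
  qed
  have kkt1: "gen_eq (boxset lo up \<times> UNIV) (Hmap J G rho (snd ws) ws1 d' s1) ws1"
    unfolding Heq using wstar_kkt by (simp add: ws1_def s1_def)
  have ws1ball: "ws1 \<in> ball ws deltaB"
  proof -
    have "wA k s1 \<in> ball (wstar k) deltaA" using A_sol s1in by blast
    then show ?thesis using B_pos(4) ws1A by (simp add: ws_def)
  qed
  have ws1B: "ws1 = wB k d' s1"
  proof -
    have "\<forall>w \<in> ball (wstar k) deltaB.
             gen_eq (boxset lo up \<times> UNIV) (Hmap J G rho (snd (wstar k)) w d' s1) w \<longrightarrow> w = wB k d' s1"
      using B_sol d'in s1inB by blast
    then show ?thesis using ws1ball kkt1 unfolding ws_def by simp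
  qed
  have nmu: "norm (mubar k - snd ws) \<le> norm (wb - ws)"
    using norm_snd_le2[of "wb - ws"] by (simp add: wb_def)
  have ndk: "norm (d k) \<le> norm (wb - ws) / rho" using d_def nmu rho_pos
    by (simp add: ws_def divide_right_mono)
  have "norm (wb - ws) / rho < qB" using wbar_close rho_pos
    by (simp add: wb_def ws_def divide_less_eq)
  then have dkin: "d k \<in> ball 0 qB" using ndk by simp
  have winfB: "winf k = wB k (d k) s1"
    using C_lim dkin step_small(2) by (simp add: s1_def)
  have L1: "norm (winf k - ws1) \<le> lamB * norm (Hmap J G rho (snd ws) ws1 (d k) s1
                         - Hmap J G rho (snd ws) ws1 d' s1)"
    using B_lip[rule_format, OF dkin d'in s1inB s1inB] by (simp add: winfB ws1B ws_def)
  have L2: "norm (Hmap J G rho (snd ws) ws1 (d k) s1 - Hmap J G rho (snd ws) ws1 d' s1)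
      \<le> lamH * norm ((d k, s1) - (d', s1))"
    using H_lip by blast
  have "norm ((d k, s1) - (d', s1)) = norm (d k - d')" by (simp add: norm_Pair)
  also have "d k - d' = (1 / rho) *\<^sub>R ((mubar k - snd ws) - (snd ws1 - snd ws))"
    using d_def by (simp add: d'_def ws_def algebra_simps)
  also have "norm \<dots> \<le> (1 / rho) * (norm (wb - ws) + lamA * LF * D)"
  proof -
    have "norm ((mubar k - snd ws) - (snd ws1 - snd ws)) \<le> norm (wb - ws) + lamA * LF * D"
      using norm_triangle_ineq4[of "mubar k - snd ws" "snd ws1 - snd ws"] nmu nsnd wdist by linarith
    then show ?thesis using rho_pos by (simp add: divide_right_mono)
  qed
  finally have L3: "norm ((d k, s1) - (d', s1)) \<le> (1 / rho) * (norm (wb - ws) + lamA * LF * D)" .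
  have "lamH * norm ((d k, s1) - (d', s1)) \<le> lamH * ((1 / rho) * (norm (wb - ws) + lamA * LF * D))"
    using L3 lamH_pos by (intro mult_left_mono) auto
  then have "norm (Hmap J G rho (snd ws) ws1 (d k) s1 - Hmap J G rho (snd ws) ws1 d' s1)
      \<le> lamH * ((1 / rho) * (norm (wb - ws) + lamA * LF * D))" using L2 by linarith
  then have "lamB * norm (Hmap J G rho (snd ws) ws1 (d k) s1 - Hmap J G rho (snd ws) ws1 d' s1)
      \<le> lamB * (lamH * ((1 / rho) * (norm (wb - ws) + lamA * LF * D)))"
    using B_pos(3) by (intro mult_left_mono) auto
  then have "norm (winf k - ws1) \<le> lamB * (lamH * ((1 / rho) * (norm (wb - ws) + lamA * LF * D)))"
    using L1 by linarith
  then show ?thesis by (simp add: ws1_def wb_def ws_def LF_def D_def s1_def s0_def)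
qed

end
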